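(* Let $\mathbb F_q$ be a finite field with $q>2$ elements and let $\mathbb F_q^*=\mathbb F_q\setminus\{0\}$. In the integral group ring $\mathbb Z[\mathrm{SL}_2(\mathbb F_q)]$ consider the seven elements $$A=\left(\begin{array}{cc}\mathbb F_q^*&0\\0&\mathbb F_q^*\end{array}\right),\ B=\left(\begin{array}{cc}0&\mathbb F_q^*\\\mathbb F_q^*&0\end{array}\right),\ C=\left(\begin{array}{cc}\mathbb F_q^*&\mathbb F_q^*\\\mathbb F_q^*&\mathbb F_q^*\end{array}\right),$$ $$D_+=\left(\begin{array}{cc}\mathbb F_q^*&\mathbb F_q^*\\0&\mathbb F_q^*\end{array}\right),\ D_-=\left(\begin{array}{cc}\mathbb F_q^*&0\\\mathbb F_q^*&\mathbb F_q^*\end{array}\right),\ E_+=\left(\begin{array}{cc}\mathbb F_q^*&\mathbb F_q^*\\\mathbb F_q^*&0\end{array}\right),\ E_-=\left(\begin{array}{cc}0&\mathbb F_q^*\\\mathbb F_q^*&\mathbb F_q^*\end{array}\right)$$ (notation explained in the context). Then the $\mathbb Z$-module $$\mathcal{SC}=\mathbb Z A+\mathbb Z B+\mathbb ZC+\mathbb ZD_++\mathbb ZD_-+\mathbb Z E_++\mathbb Z E_-$$ is a subring of $\mathbb Z[\mathrm{SL}_2(\mathbb F_q)]$, i.e. it is closed under the multiplication of the group ring (the product of any two of the seven elements is an integral linear combination of the seven elements).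
   Context: For subsets $\mathcal A,\mathcal B,\mathcal C,\mathcal D$ of $\mathbb F_q$, the symbol $\left(\begin{array}{cc}\mathcal A&\mathcal B\\\mathcal C&\mathcal D\end{array}\right)$ denotes the element $\sum \left(\begin{array}{cc}a&b\\c&d\end{array}\right)$ of $\mathbb Z[\mathrm{SL}_2(\mathbb F_q)]$, where the sum runs over all $(a,b,c,d)\in\mathcal A\times\mathcal B\times\mathcal C\times\mathcal D$ with $ad-bc=1$; an entry $0$ stands for the singleton $\{0\}$. Thus the seven elements are the sums of all matrices of $\mathrm{SL}_2(\mathbb F_q)$ having a prescribed support (set of positions of nonzero entries). The ring $\mathcal{SC}$ need not contain the identity element of the group ring. *)

theory Defs
  imports Main
begin

text \<open>2x2 matrices over a field, written as (a, b, c, d) for the matrix [[a,b],[c,d]].\<close>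
type_synonym 'a mat2 = "'a \<times> 'a \<times> 'a \<times> 'a"

definition SL2 :: "('a::field) mat2 set" where
  "SL2 = {(a, b, c, d). a * d - b * c = 1}"

fun mmul :: "('a::field) mat2 \<Rightarrow> 'a mat2 \<Rightarrow> 'a mat2" where
  "mmul (a, b, c, d) (e, f, g, h) = (a*e + b*g, a*f + b*h, c*e + d*g, c*f + d*h)"

text \<open>Elements of the integral group ring Z[SL_2(F_q)] are represented as integer-valued
  functions on matrices (vanishing outside SL2); the group is finite when the field is.\<close>
type_synonym 'a grpring = "'a mat2 \<Rightarrow> int"

definition gr_mult :: "('a::field) grpring \<Rightarrow> 'a grpring \<Rightarrow> 'a grpring" where
  "gr_mult x y = (\<lambda>g. \<Sum>(h, k) \<in> {(h, k). h \<in> SL2 \<and> k \<in> SL2 \<and> mmul h k = g}. x h * y k)"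

text \<open>The symbol (A B; C D): sum of all matrices in SL2 with entries in the given sets.\<close>
definition supp_elt :: "('a::field) set \<Rightarrow> 'a set \<Rightarrow> 'a set \<Rightarrow> 'a set \<Rightarrow> 'a grpring" where
  "supp_elt SA SB SC SD = (\<lambda>(a, b, c, d).
     if a * d - b * c = 1 \<and> a \<in> SA \<and> b \<in> SB \<and> c \<in> SC \<and> d \<in> SD then 1 else 0)"

definition nzs :: "('a::field) set" where "nzs = UNIV - {0}"
definition zs :: "('a::field) set" where "zs = {0}"

definition elA :: "('a::field) grpring" where "elA = supp_elt nzs zs zs nzs"
definition elB :: "('a::field) grpring" where "elB = supp_elt zs nzs nzs zs"
definition elC :: "('a::field) grpring" where "elC = supp_elt nzs nzs nzs nzs"
definition elDp :: "('a::field) grpring" where "elDp = supp_elt nzs nzs zs nzs"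
definition elDm :: "('a::field) grpring" where "elDm = supp_elt nzs zs nzs nzs"
definition elEp :: "('a::field) grpring" where "elEp = supp_elt nzs nzs nzs zs"
definition elEm :: "('a::field) grpring" where "elEm = supp_elt zs nzs nzs nzs"

definition SCmod :: "('a::field) grpring set" where
  "SCmod = {x. \<exists>a b c dp dm ep em :: int.
     x = (\<lambda>g. a * elA g + b * elB g + c * elC g + dp * elDp g + dm * elDm g
              + ep * elEp g + em * elEm g)}"

end

theory Submission imports Defs begin

definition cls :: "('a::field) mat2 \<Rightarrow> bool\<times>bool\<times>bool\<times>bool" where
  "cls = (\<lambda>(a,b,c,d). (a=0,b=0,c=0,d=0))"
fun minv :: "('a::field) mat2 \<Rightarrow> 'a mat2" where "minv (a,b,c,d) = (d,-b,-c,a)"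
definition pt :: "('a::field)\<times>'a \<Rightarrow> 'a option" where
  "pt = (\<lambda>(u1,u2). if u1=0 then None else Some(u2/u1))"
definition prj :: "('a::field) mat2 \<Rightarrow> 'a option \<times> 'a option" where
  "prj = (\<lambda>(a,b,c,d). (pt(a,c), pt(b,d)))"
definition rel :: "'b \<times> 'b \<Rightarrow> 'b \<times> 'b \<Rightarrow> bool\<times>bool\<times>bool\<times>bool" where
  "rel = (\<lambda>(R,S) (P1,P2). (S=P1, S=P2, R=P1, R=P2))"
definition cl0 :: "('a::field) option \<times> 'a option \<Rightarrow> bool\<times>bool\<times>bool\<times>bool" where
  "cl0 = (\<lambda>(R,S). (R=None, S=None, R=Some 0, S=Some 0))"
definition inv_cls :: "('a::field) grpring \<Rightarrow> bool" where
  "inv_cls x \<longleftrightarrow> (\<forall>g. g\<notin>SL2 \<longrightarrow> x g = 0) \<and>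
     (\<forall>g g'. g\<in>SL2 \<longrightarrow> g'\<in>SL2 \<longrightarrow> cls g = cls g' \<longrightarrow> x g = x g')"

lemma pt_eq:
  fixes u1 u2 v1 v2 :: "'a::field"
  assumes "u1 \<noteq> 0 \<or> u2 \<noteq> 0" "v1 \<noteq> 0 \<or> v2 \<noteq> 0"
  shows "pt (u1,u2) = pt (v1,v2) \<longleftrightarrow> u1*v2 = u2*v1"
  using assms by (auto simp: pt_def field_simps)

lemma SL2_iff: "(a,b,c,d) \<in> SL2 \<longleftrightarrow> a*d - b*c = 1"
  by (simp add: SL2_def)

lemma cls_rel:
  fixes a b c d e f g k :: "'a::field"
  assumes "(a,b,c,d) \<in> SL2" "(e,f,g,k) \<in> SL2"
  shows "cls (mmul (minv (a,b,c,d)) (e,f,g,k)) = rel (prj (a,b,c,d)) (prj (e,f,g,k))"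
proof -
  have n1: "a \<noteq> 0 \<or> c \<noteq> 0" "b \<noteq> 0 \<or> d \<noteq> 0" "e \<noteq> 0 \<or> g \<noteq> 0" "f \<noteq> 0 \<or> k \<noteq> 0"
    using assms by (auto simp: SL2_iff)
  show ?thesis
    using pt_eq[OF n1(2) n1(3)] pt_eq[OF n1(2) n1(4)] pt_eq[OF n1(1) n1(3)] pt_eq[OF n1(1) n1(4)]
    by (auto simp: cls_def rel_def prj_def algebra_simps)
qed

lemma cls_cl0:
  fixes a b c d :: "'a::field"
  assumes "(a,b,c,d) \<in> SL2"
  shows "cls (a,b,c,d) = cl0 (prj (a,b,c,d))"
  using assms by (auto simp: cls_def cl0_def prj_def pt_def SL2_iff)


lemma mmul_SL2: "h \<in> SL2 \<Longrightarrow> k \<in> SL2 \<Longrightarrow> mmul h k \<in> SL2"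
proof -
  assume "h \<in> SL2" "k \<in> SL2"
  moreover obtain a b c d where h: "h = (a,b,c,d)" by (cases h) auto
  moreover obtain e f g l where k: "k = (e,f,g,l)" by (cases k) auto
  ultimately have 1: "a*d - b*c = 1" "e*l - f*g = 1" by (auto simp: SL2_iff)
  have "(a*e + b*g)*(c*f + d*l) - (a*f + b*l)*(c*e + d*g) = (a*d-b*c)*(e*l-f*g)"
    by (simp add: algebra_simps)
  with 1 show ?thesis by (simp add: h k SL2_iff)
qed

lemma minv_SL2: "h \<in> SL2 \<Longrightarrow> minv h \<in> SL2"
  by (cases h) (auto simp: SL2_iff algebra_simps)

lemma mmul_minv1: "h \<in> SL2 \<Longrightarrow> mmul h (mmul (minv h) g) = g"
proof -
  assume "h \<in> SL2"
  moreover obtain a b c d where h: "h = (a,b,c,d)" by (cases h) auto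
  moreover obtain e f k l where g: "g = (e,f,k,l)" by (cases g) auto
  ultimately have 1: "a*d - b*c = 1" by (auto simp: SL2_iff)
  have "a * (d * e + - b * k) + b * (- c * e + a * k) = (a*d-b*c)*e"
       "a * (d * f + - b * l) + b * (- c * f + a * l) = (a*d-b*c)*f"
       "c * (d * e + - b * k) + d * (- c * e + a * k) = (a*d-b*c)*k"
       "c * (d * f + - b * l) + d * (- c * f + a * l) = (a*d-b*c)*l"
    by (simp_all add: algebra_simps)
  with 1 show ?thesis by (simp add: h g)
qed

lemma mmul_minv2: "h \<in> SL2 \<Longrightarrow> mmul (minv h) (mmul h g) = g"
proof -
  assume "h \<in> SL2"
  moreover obtain a b c d where h: "h = (a,b,c,d)" by (cases h) auto
  moreover obtain e f k l where g: "g = (e,f,k,l)" by (cases g) auto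
  ultimately have 1: "a*d - b*c = 1" by (auto simp: SL2_iff)
  have "d * (a * e + b * k) + - b * (c * e + d * k) = (a*d-b*c)*e"
       "d * (a * f + b * l) + - b * (c * f + d * l) = (a*d-b*c)*f"
       "- c * (a * e + b * k) + a * (c * e + d * k) = (a*d-b*c)*k"
       "- c * (a * f + b * l) + a * (c * f + d * l) = (a*d-b*c)*l"
    by (simp_all add: algebra_simps)
  with 1 show ?thesis by (simp add: h g)
qed

lemma gr_mult_out: "g \<notin> SL2 \<Longrightarrow> gr_mult x y g = 0"
proof -
  assume g: "g \<notin> SL2"
  have e: "{(h, k). h \<in> SL2 \<and> k \<in> SL2 \<and> mmul h k = g} = {}"
    using g mmul_SL2 by blast
  show ?thesis unfolding gr_mult_def e by simp
qed

lemma gr_mult_in: "g \<in> SL2 \<Longrightarrow> gr_mult x y g = (\<Sum>h\<in>SL2. x h * y (mmul (minv h) g))"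
proof -
  assume g: "g \<in> SL2"
  have e: "{(h, k). h \<in> SL2 \<and> k \<in> SL2 \<and> mmul h k = g} = (\<lambda>h. (h, mmul (minv h) g)) ` SL2"
  proof (rule set_eqI, rule iffI)
    fix p assume "p \<in> {(h, k). h \<in> SL2 \<and> k \<in> SL2 \<and> mmul h k = g}"
    then obtain h k where p: "p = (h,k)" "h \<in> SL2" "k \<in> SL2" "mmul h k = g" by blast
    then have "k = mmul (minv h) g" using mmul_minv2[of h k] by simp
    then show "p \<in> (\<lambda>h. (h, mmul (minv h) g)) ` SL2" using p by blast
  next
    fix p assume "p \<in> (\<lambda>h. (h, mmul (minv h) g)) ` SL2"
    then obtain h where p: "p = (h, mmul (minv h) g)" "h \<in> SL2" by blast
    then show "p \<in> {(h, k). h \<in> SL2 \<and> k \<in> SL2 \<and> mmul h k = g}"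
    proof -
      have "mmul (minv h) g \<in> SL2" using g p(2) minv_SL2 mmul_SL2 by blast
      moreover have "mmul h (mmul (minv h) g) = g" using p(2) by (rule mmul_minv1)
      ultimately show ?thesis using p by simp
    qed
  qed
  have i: "inj_on (\<lambda>h. (h, mmul (minv h) g)) SL2" by (auto simp: inj_on_def)
  show ?thesis unfolding gr_mult_def e by (simp add: sum.reindex[OF i])
qed

lemma el_vals:
  fixes a b c d :: "'a::field"
  shows
  "elA (a,b,c,d) = (if a*d-b*c=1 \<and> cls (a,b,c,d) = (False,True,True,False) then 1 else 0)"
  "elB (a,b,c,d) = (if a*d-b*c=1 \<and> cls (a,b,c,d) = (True,False,False,True) then 1 else 0)"
  "elC (a,b,c,d) = (if a*d-b*c=1 \<and> cls (a,b,c,d) = (False,False,False,False) then 1 else 0)"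
  "elDp (a,b,c,d) = (if a*d-b*c=1 \<and> cls (a,b,c,d) = (False,False,True,False) then 1 else 0)"
  "elDm (a,b,c,d) = (if a*d-b*c=1 \<and> cls (a,b,c,d) = (False,True,False,False) then 1 else 0)"
  "elEp (a,b,c,d) = (if a*d-b*c=1 \<and> cls (a,b,c,d) = (False,False,False,True) then 1 else 0)"
  "elEm (a,b,c,d) = (if a*d-b*c=1 \<and> cls (a,b,c,d) = (True,False,False,False) then 1 else 0)"
  by (auto simp: elA_def elB_def elC_def elDp_def elDm_def elEp_def elEm_def supp_elt_def nzs_def zs_def cls_def)

lemma SC_imp: "x \<in> SCmod \<Longrightarrow> inv_cls x"
proof -
  assume "x \<in> SCmod"
  then obtain a b c dp dm ep em :: int where x: "x = (\<lambda>g. a * elA g + b * elB g + c * elC g + dp * elDp g + dm * elDm g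
              + ep * elEp g + em * elEm g)" by (auto simp: SCmod_def)
  show ?thesis unfolding inv_cls_def
  proof (intro conjI allI impI)
    fix g :: "'a mat2" assume "g \<notin> SL2" then show "x g = 0"
      by (cases g) (simp add: x el_vals SL2_iff)
  next
    fix g g' :: "'a mat2" assume "g \<in> SL2" "g' \<in> SL2" "cls g = cls g'"
    then show "x g = x g'"
      by (cases g; cases g') (simp add: x el_vals SL2_iff)
  qed
qed

definition co :: "('a::field) grpring \<Rightarrow> bool\<times>bool\<times>bool\<times>bool \<Rightarrow> int" where
  "co x p = x (SOME h. h \<in> SL2 \<and> cls h = p)"

lemma co_eq: "inv_cls x \<Longrightarrow> h \<in> SL2 \<Longrightarrow> x h = co x (cls h)"
  unfolding co_def inv_cls_def by (metis (mono_tags, lifting) someI)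

lemma cls_cases:
  fixes a b c d :: "'a::field"
  assumes "a*d-b*c=1"
  shows "cls(a,b,c,d) \<in> {(False,True,True,False),(True,False,False,True),(False,False,False,False),
     (False,False,True,False),(False,True,False,False),(False,False,False,True),(True,False,False,False)}"
  using assms by (cases "a=0"; cases "b=0"; cases "c=0"; cases "d=0") (simp_all add: cls_def)

lemma imp_SC: fixes x :: "('a::field) grpring" shows "inv_cls x \<Longrightarrow> x \<in> SCmod"
proof -
  assume ix: "inv_cls x"
  define r :: "'a grpring" where "r = (\<lambda>g. co x (False,True,True,False) * elA g + co x (True,False,False,True) * elB g
     + co x (False,False,False,False) * elC g + co x (False,False,True,False) * elDp g
     + co x (False,True,False,False) * elDm g
     + co x (False,False,False,True) * elEp g + co x (True,False,False,False) * elEm g)"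
  have "x g = r g" for g :: "'a mat2"
  proof -
    obtain a b c d where g: "g = (a,b,c,d)" by (cases g) auto
    show "x g = r g"
    proof (cases "g \<in> SL2")
      case False
      then have "x g = 0" using ix unfolding inv_cls_def by blast
      moreover have "a*d-b*c \<noteq> 1" using False by (simp add: g SL2_iff)
      ultimately show ?thesis by (simp add: r_def g el_vals)
    next
      case True
      then have d: "a*d-b*c = 1" by (simp add: g SL2_iff)
      have "x g = co x (cls g)" using co_eq[OF ix True] .
      moreover have "r g = co x (cls g)"
        using cls_cases[OF d] unfolding g by (elim insertE emptyE) (simp_all add: r_def el_vals d)
      ultimately show ?thesis by simp
    qed
  qed
  then have eq: "x = r" by (intro ext)
  show ?thesis unfolding SCmod_def mem_Collect_eq using eq unfolding r_def by blast
qed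


fun vec :: "('a::field) option \<Rightarrow> 'a \<times> 'a" where
  "vec None = (0,1)" | "vec (Some t) = (1,t)"

lemma pt_vec: "pt (vec R) = R"
  by (cases R) (auto simp: pt_def)

lemma vec_nz: "fst (vec R) \<noteq> 0 \<or> snd (vec R) \<noteq> 0"
  by (cases R) auto

lemma pt_scale: "(l::'a::field) \<noteq> 0 \<Longrightarrow> pt (l*u1, l*u2) = pt (u1,u2)"
  by (auto simp: pt_def)

lemma decomp:
  fixes u1 u2 :: "'a::field"
  assumes "u1 \<noteq> 0 \<or> u2 \<noteq> 0"
  shows "\<exists>l. l \<noteq> 0 \<and> u1 = l * fst (vec (pt (u1,u2))) \<and> u2 = l * snd (vec (pt (u1,u2)))"
proof (cases "u1 = 0")
  case True then show ?thesis using assms by (auto simp: pt_def)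
next
  case False then show ?thesis by (intro exI[of _ u1]) (auto simp: pt_def)
qed

lemma vec_det_nz:
  assumes "R \<noteq> S"
  shows "fst (vec R) * snd (vec S) - snd (vec R) * fst (vec S) \<noteq> (0::'a::field)"
proof
  assume "fst (vec R) * snd (vec S) - snd (vec R) * fst (vec S) = (0::'a)"
  then have "pt (fst (vec R), snd (vec R)) = pt (fst (vec S), snd (vec S))"
    using pt_eq[OF vec_nz[of R] vec_nz[of S]] by simp
  then show False using assms pt_vec by (metis prod.collapse)
qed

lemma fiber_diag:
  fixes R :: "('a::field) option"
  shows "{h \<in> SL2. prj h = (R,R)} = {}"
proof -
  { fix a b c d :: 'a assume h: "(a,b,c,d) \<in> SL2" "prj (a,b,c,d) = (R,R)"
    then have 1: "a*d - b*c = 1" by (simp add: SL2_iff)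
    have n: "a \<noteq> 0 \<or> c \<noteq> 0" "b \<noteq> 0 \<or> d \<noteq> 0" using 1 by auto
    have "pt (a,c) = pt (b,d)" using h(2) by (simp add: prj_def)
    then have "a*d = c*b" using pt_eq[OF n] by simp
    with 1 have False by (simp add: algebra_simps) }
  then show ?thesis by auto
qed

lemma fiber_card:
  fixes R S :: "('a::field) option"
  assumes "R \<noteq> S"
  shows "card {h \<in> SL2. prj h = (R,S)} = card (nzs :: 'a set)"
proof -
  obtain r1 r2 where r: "vec R = (r1,r2)" by (cases "vec R") auto
  obtain s1 s2 where s: "vec S = (s1,s2)" by (cases "vec S") auto
  define \<delta> where "\<delta> = r1*s2 - r2*s1"
  have dnz: "\<delta> \<noteq> 0" using vec_det_nz[OF assms] by (simp add: r s \<delta>_def)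
  have rnz: "r1 \<noteq> 0 \<or> r2 \<noteq> 0" using vec_nz[of R] by (simp add: r)
  have snz: "s1 \<noteq> 0 \<or> s2 \<noteq> 0" using vec_nz[of S] by (simp add: s)
  have ptr: "pt (r1,r2) = R" using pt_vec[of R] by (simp add: r)
  have pts: "pt (s1,s2) = S" using pt_vec[of S] by (simp add: s)
  define \<phi> where "\<phi> = (\<lambda>l. (l*r1, s1/(l*\<delta>), l*r2, s2/(l*\<delta>)))"
  have "bij_betw \<phi> nzs {h \<in> SL2. prj h = (R,S)}"
    unfolding bij_betw_def
  proof (intro conjI)
    show "inj_on \<phi> nzs"
    proof (rule inj_onI)
      fix l m assume "l \<in> nzs" "m \<in> nzs" "\<phi> l = \<phi> m"
      then have "l*r1 = m*r1" "l*r2 = m*r2" by (auto simp: \<phi>_def)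
      then show "l = m" using rnz by auto
    qed
  next
    show "\<phi> ` nzs = {h \<in> SL2. prj h = (R,S)}"
    proof (rule set_eqI, rule iffI)
      fix h assume "h \<in> \<phi> ` nzs"
      then obtain l where l: "l \<noteq> 0" "h = \<phi> l" by (auto simp: nzs_def)
      have "l * r1 * (s2 / (l * \<delta>)) - s1 / (l * \<delta>) * (l * r2) = (r1*s2 - r2*s1)/\<delta>"
        using l(1) dnz by (simp add: diff_divide_distrib)
      also have "\<dots> = 1" using dnz by (simp add: \<delta>_def)
      finally have "l * r1 * (s2 / (l * \<delta>)) - s1 / (l * \<delta>) * (l * r2) = 1" .
      moreover have "pt (l*r1, l*r2) = R" using pt_scale[OF l(1)] ptr by simp
      moreover have "pt (s1/(l*\<delta>), s2/(l*\<delta>)) = S"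
        using pt_scale[of "1/(l*\<delta>)" s1 s2] l dnz pts by simp
      ultimately show "h \<in> {h \<in> SL2. prj h = (R,S)}"
        by (simp add: l \<phi>_def SL2_iff prj_def)
    next
      fix h assume "h \<in> {h \<in> SL2. prj h = (R,S)}"
      then obtain a b c d where h: "h = (a,b,c,d)" "a*d - b*c = 1" "pt (a,c) = R" "pt (b,d) = S"
        by (cases h) (auto simp: SL2_iff prj_def)
      have n: "a \<noteq> 0 \<or> c \<noteq> 0" "b \<noteq> 0 \<or> d \<noteq> 0" using h(2) by auto
      obtain l where l: "l \<noteq> 0" "a = l*r1" "c = l*r2" using decomp[OF n(1)] h(3) r by auto
      obtain m where m: "m \<noteq> 0" "b = m*s1" "d = m*s2" using decomp[OF n(2)] h(4) s by auto
      have "l*m*\<delta> = 1" using h(2) l m by (simp add: \<delta>_def algebra_simps)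
      then have mm: "m = 1/(l*\<delta>)" using l dnz by (simp add: field_simps)
      have "h = \<phi> l" using h(1) l m mm by (simp add: \<phi>_def)
      moreover have "l \<in> nzs" using l by (simp add: nzs_def)
      ultimately show "h \<in> \<phi> ` nzs" by blast
    qed
  qed
  then have "card (nzs :: 'a set) = card {h \<in> SL2. prj h = (R,S)}" by (rule bij_betw_same_card)
  then show ?thesis by simp
qed

lemma fiber_weight:
  fixes R S :: "('a::field) option"
  shows "card {h \<in> SL2. prj h = (R,S)} = (if R = S then 0 else card (nzs :: 'a set))"
  by (cases "R = S") (simp_all add: fiber_diag fiber_card)


lemma finite_SL2: "finite (SL2 :: ('a::{field,finite}) mat2 set)"
  by (rule finite_subset[OF subset_UNIV]) simp

lemma sum_prj:
  fixes G :: "('a::{field,finite}) option \<times> 'a option \<Rightarrow> int"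
  shows "(\<Sum>h\<in>SL2. G (prj h)) = (\<Sum>\<omega>\<in>UNIV. int (card {h\<in>SL2. prj h = \<omega>}) * G \<omega>)"
proof -
  have "(\<Sum>h\<in>SL2. G (prj h)) = (\<Sum>\<omega>\<in>UNIV. \<Sum>h\<in>{h\<in>SL2. prj h = \<omega>}. G (prj h))"
    by (rule sum.group[symmetric]) (simp_all add: finite_SL2)
  also have "\<dots> = (\<Sum>\<omega>\<in>UNIV. \<Sum>h\<in>{h\<in>SL2. prj h = \<omega>}. G \<omega>)"
    by (rule sum.cong) auto
  also have "\<dots> = (\<Sum>\<omega>\<in>UNIV. int (card {h\<in>SL2. prj h = \<omega>}) * G \<omega>)"
    by simp
  finally show ?thesis .
qed

definition sw :: "'b \<Rightarrow> 'b \<Rightarrow> 'b \<Rightarrow> 'b" where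
  "sw a b z = (if z = a then b else if z = b then a else z)"

lemma bij_sw: "bij (sw a b)"
  by (rule o_bij[of "sw a b"]) (auto simp: sw_def fun_eq_iff)

lemma perm_exists:
  fixes P1 P2 Q1 Q2 :: "('a::field) option"
  assumes "P1 \<noteq> P2" "Q1 \<noteq> Q2" "cl0 (P1,P2) = cl0 (Q1,Q2)"
  shows "\<exists>\<sigma>. bij \<sigma> \<and> \<sigma> None = None \<and> \<sigma> (Some 0) = Some 0 \<and> \<sigma> P1 = Q1 \<and> \<sigma> P2 = Q2"
proof -
  define \<sigma> where "\<sigma> = sw Q2 (sw P1 Q1 P2) \<circ> sw P1 Q1"
  have c: "P1 = None \<longleftrightarrow> Q1 = None" "P2 = None \<longleftrightarrow> Q2 = None"
    "P1 = Some 0 \<longleftrightarrow> Q1 = Some 0" "P2 = Some 0 \<longleftrightarrow> Q2 = Some 0"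
    using assms(3) by (auto simp: cl0_def)
  have "bij \<sigma>" unfolding \<sigma>_def by (intro bij_comp bij_sw)
  moreover have "\<sigma> None = None" using assms(1,2) c by (auto simp: \<sigma>_def sw_def)
  moreover have "\<sigma> (Some 0) = Some 0" using assms(1,2) c by (auto simp: \<sigma>_def sw_def)
  moreover have "\<sigma> P1 = Q1" using assms(1,2) c by (auto simp: \<sigma>_def sw_def)
  moreover have "\<sigma> P2 = Q2" using assms(1,2) c by (auto simp: \<sigma>_def sw_def)
  ultimately show ?thesis by blast
qed

definition Tot :: "('a::field) grpring \<Rightarrow> 'a grpring \<Rightarrow> 'a option \<times> 'a option \<Rightarrow> int" where
  "Tot x y P = (\<Sum>\<omega>\<in>UNIV. (if fst \<omega> = snd \<omega> then 0 else int (card (nzs :: 'a set)))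
      * (co x (cl0 \<omega>) * co y (rel \<omega> P)))"

lemma Tot_inv:
  fixes \<sigma> :: "('a::field) option \<Rightarrow> 'a option"
  assumes "bij \<sigma>" "\<sigma> None = None" "\<sigma> (Some 0) = Some 0"
  shows "Tot x y (\<sigma> P1, \<sigma> P2) = Tot x y (P1, P2)"
proof -
  have i: "inj \<sigma>" using assms(1) bij_is_inj by blast
  have b: "bij_betw (map_prod \<sigma> \<sigma>) UNIV UNIV"
    using bij_betw_map_prod[OF assms(1) assms(1)] by simp
  let ?f = "\<lambda>\<omega>. (if fst \<omega> = snd \<omega> then 0 else int (card (nzs :: 'a set)))
      * (co x (cl0 \<omega>) * co y (rel \<omega> (\<sigma> P1, \<sigma> P2)))"
  have "Tot x y (\<sigma> P1, \<sigma> P2) = (\<Sum>\<omega>\<in>UNIV. ?f (map_prod \<sigma> \<sigma> \<omega>))"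
    unfolding Tot_def by (rule sum.reindex_bij_betw[OF b, symmetric])
  also have "\<dots> = Tot x y (P1, P2)"
    unfolding Tot_def
  proof (rule sum.cong[OF refl])
    fix \<omega> :: "'a option \<times> 'a option"
    obtain R S where w: "\<omega> = (R,S)" by (cases \<omega>)
    have e1: "\<sigma> R = \<sigma> S \<longleftrightarrow> R = S" "\<sigma> S = \<sigma> P1 \<longleftrightarrow> S = P1" "\<sigma> S = \<sigma> P2 \<longleftrightarrow> S = P2"
      "\<sigma> R = \<sigma> P1 \<longleftrightarrow> R = P1" "\<sigma> R = \<sigma> P2 \<longleftrightarrow> R = P2"
      using i by (auto dest: injD)
    have e2: "\<sigma> R = None \<longleftrightarrow> R = None" "\<sigma> S = None \<longleftrightarrow> S = None"
      "\<sigma> R = Some 0 \<longleftrightarrow> R = Some 0" "\<sigma> S = Some 0 \<longleftrightarrow> S = Some 0"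
      using i assms(2,3) by (metis injD)+
    show "?f (map_prod \<sigma> \<sigma> \<omega>) = (if fst \<omega> = snd \<omega> then 0 else int (card (nzs :: 'a set)))
      * (co x (cl0 \<omega>) * co y (rel \<omega> (P1, P2)))"
      unfolding w by (simp only: map_prod_simp fst_conv snd_conv cl0_def rel_def case_prod_conv e1 e2)
  qed
  finally show ?thesis .
qed

lemma cls_cl0': "h \<in> SL2 \<Longrightarrow> cls h = cl0 (prj h)"
  by (cases h) (simp add: cls_cl0)

lemma cls_rel': "h \<in> SL2 \<Longrightarrow> g \<in> SL2 \<Longrightarrow> cls (mmul (minv h) g) = rel (prj h) (prj g)"
  by (cases h; cases g) (simp only: cls_rel)

lemma gr_Tot:
  fixes x y :: "('a::{field,finite}) grpring"
  assumes ix: "inv_cls x" and iy: "inv_cls y" and g: "g \<in> SL2"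
  shows "gr_mult x y g = Tot x y (prj g)"
proof -
  have "gr_mult x y g = (\<Sum>h\<in>SL2. x h * y (mmul (minv h) g))" by (rule gr_mult_in[OF g])
  also have "\<dots> = (\<Sum>h\<in>SL2. (\<lambda>\<omega>. co x (cl0 \<omega>) * co y (rel \<omega> (prj g))) (prj h))"
  proof (rule sum.cong[OF refl])
    fix h :: "'a mat2" assume h: "h \<in> SL2"
    have k: "mmul (minv h) g \<in> SL2" using h g minv_SL2 mmul_SL2 by blast
    show "x h * y (mmul (minv h) g) = (\<lambda>\<omega>. co x (cl0 \<omega>) * co y (rel \<omega> (prj g))) (prj h)"
      using co_eq[OF ix h] co_eq[OF iy k] cls_cl0'[OF h] cls_rel'[OF h g] by simp
  qed
  also have "\<dots> = (\<Sum>\<omega>\<in>UNIV. int (card {h\<in>SL2. prj h = \<omega>}) * (co x (cl0 \<omega>) * co y (rel \<omega> (prj g))))"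
    by (rule sum_prj)
  also have "\<dots> = Tot x y (prj g)"
    unfolding Tot_def
  proof (rule sum.cong[OF refl])
    fix \<omega> :: "'a option \<times> 'a option"
    obtain R S where w: "\<omega> = (R,S)" by (cases \<omega>)
    show "int (card {h\<in>SL2. prj h = \<omega>}) * (co x (cl0 \<omega>) * co y (rel \<omega> (prj g))) =
      (if fst \<omega> = snd \<omega> then 0 else int (card (nzs :: 'a set))) * (co x (cl0 \<omega>) * co y (rel \<omega> (prj g)))"
      unfolding w fiber_weight by simp
  qed
  finally show ?thesis .
qed

lemma prj_distinct: "g \<in> SL2 \<Longrightarrow> fst (prj g) \<noteq> snd (prj g)"
  using fiber_diag[of "fst (prj g)"] by (metis (mono_tags, lifting) empty_iff mem_Collect_eq prod.collapse)

lemma prod_inv: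
  fixes x y :: "('a::{field,finite}) grpring"
  assumes ix: "inv_cls x" and iy: "inv_cls y"
  shows "inv_cls (gr_mult x y)"
  unfolding inv_cls_def
proof (intro conjI allI impI)
  fix g :: "'a mat2" assume "g \<notin> SL2" then show "gr_mult x y g = 0" by (rule gr_mult_out)
next
  fix g g' :: "'a mat2" assume g: "g \<in> SL2" and g': "g' \<in> SL2" and c: "cls g = cls g'"
  obtain P1 P2 where p: "prj g = (P1,P2)" by (cases "prj g")
  obtain Q1 Q2 where q: "prj g' = (Q1,Q2)" by (cases "prj g'")
  have "P1 \<noteq> P2" using prj_distinct[OF g] p by simp
  moreover have "Q1 \<noteq> Q2" using prj_distinct[OF g'] q by simp
  moreover have "cl0 (P1,P2) = cl0 (Q1,Q2)" using c cls_cl0'[OF g] cls_cl0'[OF g'] p q by simp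
  ultimately obtain \<sigma> where s: "bij \<sigma>" "\<sigma> None = None" "\<sigma> (Some 0) = Some 0" "\<sigma> P1 = Q1" "\<sigma> P2 = Q2"
    using perm_exists by blast
  have "gr_mult x y g' = Tot x y (\<sigma> P1, \<sigma> P2)" using gr_Tot[OF ix iy g'] q s by simp
  also have "\<dots> = Tot x y (P1,P2)" by (rule Tot_inv[OF s(1-3)])
  also have "\<dots> = gr_mult x y g" using gr_Tot[OF ix iy g] p by simp
  finally show "gr_mult x y g = gr_mult x y g'" by simp
qed

theorem theorem2p1:
  fixes x y :: "('a::{field,finite}) grpring"
  assumes "card (UNIV :: 'a set) > 2"
    and "x \<in> SCmod" and "y \<in> SCmod"
  shows "gr_mult x y \<in> SCmod"
  using imp_SC[OF prod_inv[OF SC_imp[OF assms(2)] SC_imp[OF assms(3)]]] .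

end
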